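(* Let $P=(\mathbb C^2\setminus\{0\})/\mathbb Z$ be the Hopf surface, the quotient by the $\mathbb Z$-action generated by $z\mapsto 2z$, with the complex structure $J$ induced from $\mathbb C^2$. Then $H^1_J(P)=0$. In particular, since $H^1_{dR}(P)\cong\mathbb R$, the natural map $H^1_J(P)\to H^1_{dR}(P)$ is not an isomorphism.
   Context: For a vector-valued $k$-form $K=K^je_j$ on $M$, $\iota_K\alpha=K^j\wedge(\iota_{e_j}\alpha)$ and $\mathcal L_K=\iota_K\mathrm d-(-1)^{k-1}\mathrm d\iota_K$. For an almost complex structure $J$, $\mathcal L_J$ has degree $1$ and anticommutes with $\mathrm d$, so $\mathrm d$ preserves $(\ker\mathcal L_J)^k=\{\alpha\in\Omega^k(M):\mathcal L_J\alpha=0\}$ (real forms); the $J$-cohomology $H^k_J(M)$ is the $k$-th cohomology of $((\ker\mathcal L_J)^\bullet,\mathrm d)$, and the natural map to de Rham cohomology is induced by inclusion. *)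

theory Defs
  imports "HOL-Analysis.Analysis"
begin

text \<open>Differential forms on P are identified with forms on U = C^2 - {0} invariant under
  pull-back by the generator h z = 2 z.  A 0-form is a function U -> real, a 1-form is a
  map z -> (linear functional on tangent vectors), a 2-form is a map z -> (bilinear alternating
  functional); only the values on U matter.\<close>

type_synonym pt = "complex \<times> complex"

definition U :: "pt set" where "U = - {0}"

definition hopf_gen :: "pt \<Rightarrow> pt" where "hopf_gen z = (2::real) *\<^sub>R z"

fun Ck_on :: "nat \<Rightarrow> pt set \<Rightarrow> (pt \<Rightarrow> real) \<Rightarrow> bool" where
  "Ck_on 0 S f = continuous_on S f"
| "Ck_on (Suc n) S f = (f differentiable_on S \<and>
      (\<forall>v. Ck_on n S (\<lambda>x. frechet_derivative f (at x) v)))"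

definition smooth_on :: "pt set \<Rightarrow> (pt \<Rightarrow> real) \<Rightarrow> bool" where
  "smooth_on S f = (\<forall>n. Ck_on n S f)"

definition Jc :: "pt \<Rightarrow> pt" where "Jc v = (\<i> * fst v, \<i> * snd v)"

definition form0 :: "(pt \<Rightarrow> real) \<Rightarrow> bool" where
  "form0 f \<longleftrightarrow> smooth_on U f \<and> (\<forall>z\<in>U. f (hopf_gen z) = f z)"

definition form1 :: "(pt \<Rightarrow> pt \<Rightarrow> real) \<Rightarrow> bool" where
  "form1 \<alpha> \<longleftrightarrow> (\<forall>z\<in>U. linear (\<alpha> z)) \<and> (\<forall>v. smooth_on U (\<lambda>z. \<alpha> z v))
     \<and> (\<forall>z\<in>U. \<forall>v. \<alpha> (hopf_gen z) ((2::real) *\<^sub>R v) = \<alpha> z v)"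

definition d0 :: "(pt \<Rightarrow> real) \<Rightarrow> pt \<Rightarrow> pt \<Rightarrow> real" where
  "d0 f z v = frechet_derivative f (at z) v"

definition d1 :: "(pt \<Rightarrow> pt \<Rightarrow> real) \<Rightarrow> pt \<Rightarrow> pt \<Rightarrow> pt \<Rightarrow> real" where
  "d1 \<alpha> z v w = frechet_derivative (\<lambda>y. \<alpha> y w) (at z) v
                - frechet_derivative (\<lambda>y. \<alpha> y v) (at z) w"

text \<open>Insertion iota_J (J a vector-valued 1-form): zero on 0-forms,
  alpha o J on 1-forms, and (iota_J omega)(v,w) = omega(Jv,w) + omega(v,Jw) on 2-forms
  (this is J^j wedge iota_{e_j} omega).\<close>
definition iJ1 :: "(pt \<Rightarrow> pt \<Rightarrow> real) \<Rightarrow> pt \<Rightarrow> pt \<Rightarrow> real" where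
  "iJ1 \<alpha> z v = \<alpha> z (Jc v)"

definition iJ2 :: "(pt \<Rightarrow> pt \<Rightarrow> pt \<Rightarrow> real) \<Rightarrow> pt \<Rightarrow> pt \<Rightarrow> pt \<Rightarrow> real" where
  "iJ2 \<omega> z v w = \<omega> z (Jc v) w + \<omega> z v (Jc w)"

text \<open>L_J = iota_J d - (-1)^(1-1) d iota_J = iota_J d - d iota_J.
  On 0-forms iota_J f = 0, so L_J f = iota_J (d f).\<close>
definition LJ0 :: "(pt \<Rightarrow> real) \<Rightarrow> pt \<Rightarrow> pt \<Rightarrow> real" where
  "LJ0 f = iJ1 (d0 f)"

definition LJ1 :: "(pt \<Rightarrow> pt \<Rightarrow> real) \<Rightarrow> pt \<Rightarrow> pt \<Rightarrow> pt \<Rightarrow> real" where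
  "LJ1 \<alpha> z v w = iJ2 (d1 \<alpha>) z v w - d1 (iJ1 \<alpha>) z v w"

definition kerLJ0 :: "(pt \<Rightarrow> real) set" where
  "kerLJ0 = {f. form0 f \<and> (\<forall>z\<in>U. \<forall>v. LJ0 f z v = 0)}"

definition kerLJ1 :: "(pt \<Rightarrow> pt \<Rightarrow> real) set" where
  "kerLJ1 = {\<alpha>. form1 \<alpha> \<and> (\<forall>z\<in>U. \<forall>v w. LJ1 \<alpha> z v w = 0)}"

definition closed1 :: "(pt \<Rightarrow> pt \<Rightarrow> real) \<Rightarrow> bool" where
  "closed1 \<alpha> \<longleftrightarrow> (\<forall>z\<in>U. \<forall>v w. d1 \<alpha> z v w = 0)"

definition H1J_trivial :: bool where
  "H1J_trivial \<longleftrightarrow> (\<forall>\<alpha>\<in>kerLJ1. closed1 \<alpha> \<longrightarrow> (\<exists>f\<in>kerLJ0. \<forall>z\<in>U. d0 f z = \<alpha> z))"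

definition H1dR_nontrivial :: bool where
  "H1dR_nontrivial \<longleftrightarrow> (\<exists>\<alpha>. form1 \<alpha> \<and> closed1 \<alpha> \<and> \<not> (\<exists>f. form0 f \<and> (\<forall>z\<in>U. d0 f z = \<alpha> z)))"

end

theory Submission
  imports Defs "HOL-Complex_Analysis.Complex_Analysis"
begin

lemma open_U: "open U" unfolding U_def by (simp add: open_Compl)

lemma U_iff: "z \<in> U \<longleftrightarrow> z \<noteq> 0" by (simp add: U_def)

lemma smooth_has_deriv:
  assumes "smooth_on U f" "z \<in> U"
  shows "(f has_derivative frechet_derivative f (at z)) (at z)"
proof -
  have "Ck_on (Suc 0) U f" using assms(1) unfolding smooth_on_def by blast
  then have "f differentiable_on U" by simp
  then have "f differentiable at z" using assms(2) open_U
    by (simp add: differentiable_on_eq_differentiable_at)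
  then show ?thesis by (simp add: frechet_derivative_works[symmetric])
qed

lemma smooth_cont: "smooth_on U f \<Longrightarrow> continuous_on U f"
  unfolding smooth_on_def using Ck_on.simps(1) by blast

lemma Ck_on_cong:
  assumes "open S" "\<forall>x\<in>S. f x = g x" "Ck_on n S f"
  shows "Ck_on n S g"
  using assms
proof (induction n arbitrary: f g)
  case 0
  have "continuous_on S f" using "0.prems"(3) by simp
  then have "continuous_on S g" using continuous_on_eq "0.prems"(2) by blast
  then show ?case by simp
next
  case (Suc n)
  have fd: "f differentiable_on S" and IHf: "\<forall>v. Ck_on n S (\<lambda>x. frechet_derivative f (at x) v)"
    using Suc.prems(3) by simp_all
  have gder: "(g has_derivative frechet_derivative f (at x)) (at x)" if "x \<in> S" for x
  proof -
    have "f differentiable at x" using fd that Suc.prems(1)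
      by (simp add: differentiable_on_eq_differentiable_at)
    then have "(f has_derivative frechet_derivative f (at x)) (at x)"
      by (simp add: frechet_derivative_works[symmetric])
    then show ?thesis
      by (rule has_derivative_transform_within_open[OF _ Suc.prems(1) that]) (use Suc.prems(2) in auto)
  qed
  have "g differentiable at x" if "x \<in> S" for x
    using gder[OF that] unfolding differentiable_def by blast
  then have "g differentiable_on S"
    using Suc.prems(1) by (simp add: differentiable_on_eq_differentiable_at)
  moreover have "Ck_on n S (\<lambda>x. frechet_derivative g (at x) v)" for v
  proof -
    have "\<forall>x\<in>S. frechet_derivative f (at x) v = frechet_derivative g (at x) v"
      using frechet_derivative_at[OF gder] by simp
    then show ?thesis by (rule Suc.IH[OF Suc.prems(1) _ IHf[rule_format]])
  qed
  ultimately show ?case by simp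
qed

inductive_set SC :: "(pt \<Rightarrow> real) set" where
  const: "(\<lambda>z. c) \<in> SC"
| lin: "(\<lambda>z. z \<bullet> b) \<in> SC"
| inv: "(\<lambda>z. inverse (z \<bullet> z)) \<in> SC"
| add: "f \<in> SC \<Longrightarrow> g \<in> SC \<Longrightarrow> (\<lambda>z. f z + g z) \<in> SC"
| mul: "f \<in> SC \<Longrightarrow> g \<in> SC \<Longrightarrow> (\<lambda>z. f z * g z) \<in> SC"

lemma SC_deriv:
  "f \<in> SC \<Longrightarrow> \<exists>f'. (\<forall>z\<in>U. (f has_derivative f' z) (at z)) \<and> (\<forall>v. (\<lambda>z. f' z v) \<in> SC)"
proof (induction rule: SC.induct)
  case (const c)
  show ?case
    by (rule exI[of _ "\<lambda>z v. 0"]) (simp add: SC.const)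
next
  case (lin b)
  show ?case
    by (rule exI[of _ "\<lambda>z v. v \<bullet> b"]) (auto intro!: bounded_linear_imp_has_derivative bounded_linear_inner_left SC.const)
next
  case inv
  show ?case
  proof (rule exI[of _ "\<lambda>z v. inverse (z \<bullet> z) * ((- 2) * (z \<bullet> v)) * inverse (z \<bullet> z)"], intro conjI ballI allI)
    fix z assume "z \<in> U"
    then have "z \<bullet> z \<noteq> 0" by (simp add: U_iff)
    show "((\<lambda>z. inverse (z \<bullet> z)) has_derivative
      (\<lambda>v. inverse (z \<bullet> z) * ((- 2) * (z \<bullet> v)) * inverse (z \<bullet> z))) (at z)"
    proof (rule has_derivative_eq_rhs)
      show "((\<lambda>z. inverse (z \<bullet> z)) has_derivative (\<lambda>h. - (inverse (z \<bullet> z) * (z \<bullet> h + h \<bullet> z) * inverse (z \<bullet> z)))) (at z)"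
        by (rule Deriv.has_derivative_inverse[OF \<open>z \<bullet> z \<noteq> 0\<close> has_derivative_inner[OF has_derivative_ident has_derivative_ident]])
    qed (auto simp: inner_commute algebra_simps)
  next
    fix v
    show "(\<lambda>z. inverse (z \<bullet> z) * ((- 2) * (z \<bullet> v)) * inverse (z \<bullet> z)) \<in> SC"
      using SC.mul[OF SC.mul[OF SC.inv SC.mul[OF SC.const SC.lin]] SC.inv] .
  qed
next
  case (add f g)
  then obtain f' g' where d1: "\<forall>z\<in>U. (f has_derivative f' z) (at z)" and s1: "\<forall>v. (\<lambda>z. f' z v) \<in> SC"
    and d2: "\<forall>z\<in>U. (g has_derivative g' z) (at z)" and s2: "\<forall>v. (\<lambda>z. g' z v) \<in> SC" by blast
  show ?case
  proof (intro exI[of _ "\<lambda>z v. f' z v + g' z v"] conjI ballI allI)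
    fix z assume z: "z \<in> U"
    show "((\<lambda>z. f z + g z) has_derivative (\<lambda>v. f' z v + g' z v)) (at z)"
      using has_derivative_add[OF d1[rule_format, OF z] d2[rule_format, OF z]] .
  next
    fix v
    show "(\<lambda>z. f' z v + g' z v) \<in> SC"
      using SC.add[OF s1[rule_format] s2[rule_format]] .
  qed
next
  case (mul f g)
  then obtain f' g' where d1: "\<forall>z\<in>U. (f has_derivative f' z) (at z)" and s1: "\<forall>v. (\<lambda>z. f' z v) \<in> SC"
    and d2: "\<forall>z\<in>U. (g has_derivative g' z) (at z)" and s2: "\<forall>v. (\<lambda>z. g' z v) \<in> SC" by blast
  show ?case
  proof (intro exI[of _ "\<lambda>z v. f z * g' z v + f' z v * g z"] conjI ballI allI)
    fix z assume z: "z \<in> U"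
    show "((\<lambda>z. f z * g z) has_derivative (\<lambda>v. f z * g' z v + f' z v * g z)) (at z)"
      using has_derivative_mult[OF d1[rule_format, OF z] d2[rule_format, OF z]] .
  next
    fix v
    show "(\<lambda>z. f z * g' z v + f' z v * g z) \<in> SC"
      using SC.add[OF SC.mul[OF mul.hyps(1) s2[rule_format]] SC.mul[OF s1[rule_format] mul.hyps(2)]] .
  qed
qed

lemma SC_Ck: "f \<in> SC \<Longrightarrow> Ck_on n U f"
proof (induction n arbitrary: f)
  case 0
  then obtain f' where d: "\<forall>z\<in>U. (f has_derivative f' z) (at z)" using SC_deriv by blast
  then show ?case
    unfolding Ck_on.simps by (intro continuous_at_imp_continuous_on ballI has_derivative_continuous) (use d in blast)
next
  case (Suc n)
  then obtain f' where d: "\<forall>z\<in>U. (f has_derivative f' z) (at z)" and s: "\<forall>v. (\<lambda>z. f' z v) \<in> SC"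
    using SC_deriv by blast
  have "f differentiable_on U"
    using d open_U differentiable_on_eq_differentiable_at differentiable_def by blast
  moreover have "Ck_on n U (\<lambda>x. frechet_derivative f (at x) v)" for v
  proof (rule Ck_on_cong[OF open_U _ Suc.IH[OF s[rule_format]]])
    show "\<forall>x\<in>U. f' x v = frechet_derivative f (at x) v"
    proof
      fix x assume x: "x \<in> U"
      from frechet_derivative_at[OF d[rule_format, OF x]] show "f' x v = frechet_derivative f (at x) v" by simp
    qed
  qed
  ultimately show ?case by simp
qed

lemma SC_smooth: "f \<in> SC \<Longrightarrow> smooth_on U f"
  unfolding smooth_on_def using SC_Ck by blast

definition a0 :: "pt \<Rightarrow> pt \<Rightarrow> real" where "a0 z v = (z \<bullet> v) / (z \<bullet> z)"

lemma a0_form1: "form1 a0"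
  unfolding form1_def
proof (intro conjI ballI allI)
  fix z :: pt assume "z \<in> U"
  show "linear (a0 z)"
    unfolding linear_iff a0_def by (simp add: inner_add_right add_divide_distrib)
next
  fix v :: pt
  have "(\<lambda>z. a0 z v) = (\<lambda>z. (z \<bullet> v) * inverse (z \<bullet> z))"
    by (simp add: a0_def divide_inverse)
  moreover have "(\<lambda>z. (z \<bullet> v) * inverse (z \<bullet> z)) \<in> SC"
    using SC.mul[OF SC.lin SC.inv] .
  ultimately show "smooth_on U (\<lambda>z. a0 z v)" using SC_smooth by simp
next
  fix z v :: pt assume "z \<in> U"
  then have "z \<bullet> z \<noteq> 0" by (simp add: U_iff)
  then show "a0 (hopf_gen z) (2 *\<^sub>R v) = a0 z v"
    by (simp add: a0_def hopf_gen_def)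
qed

lemma a0_deriv:
  assumes "z \<in> U"
  shows "((\<lambda>y. a0 y w) has_derivative
     (\<lambda>h. - (z \<bullet> w) * (inverse (z \<bullet> z) * (z \<bullet> h + h \<bullet> z) * inverse (z \<bullet> z)) + (h \<bullet> w) / (z \<bullet> z))) (at z)"
proof -
  have nz: "z \<bullet> z \<noteq> 0" using assms by (simp add: U_iff)
  have "((\<lambda>y. (y \<bullet> w) / (y \<bullet> y)) has_derivative
     (\<lambda>h. - (z \<bullet> w) * (inverse (z \<bullet> z) * (z \<bullet> h + h \<bullet> z) * inverse (z \<bullet> z)) + (h \<bullet> w) / (z \<bullet> z))) (at z)"
    using has_derivative_divide[OF bounded_linear_imp_has_derivative[OF bounded_linear_inner_left]
        has_derivative_inner[OF has_derivative_ident has_derivative_ident] nz] .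
  then show ?thesis unfolding a0_def .
qed

lemma a0_closed: "closed1 a0"
  unfolding closed1_def d1_def
proof (intro ballI allI)
  fix z v w :: pt assume z: "z \<in> U"
  show "frechet_derivative (\<lambda>y. a0 y w) (at z) v - frechet_derivative (\<lambda>y. a0 y v) (at z) w = 0"
    unfolding frechet_derivative_at[OF a0_deriv[OF z, of w], symmetric]
      frechet_derivative_at[OF a0_deriv[OF z, of v], symmetric]
    by (simp add: inner_commute algebra_simps)
qed

lemma a0_not_exact: "\<not> (\<exists>f. form0 f \<and> (\<forall>z\<in>U. d0 f z = a0 z))"
proof
  assume "\<exists>f. form0 f \<and> (\<forall>z\<in>U. d0 f z = a0 z)"
  then obtain f where f0: "form0 f" and df: "\<forall>z\<in>U. d0 f z = a0 z" by blast
  define z0 :: pt where "z0 = (1, 0)"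
  have z0z0: "z0 \<bullet> z0 = 1" by (simp add: z0_def)
  define g where "g t = f (t *\<^sub>R z0) - ln t" for t
  have gd: "(g has_real_derivative 0) (at t)" if t: "t > 0" for t
  proof -
    have tU: "t *\<^sub>R z0 \<in> U" using t by (simp add: U_iff z0_def zero_prod_def)
    have sm: "smooth_on U f" using f0 by (simp add: form0_def)
    have fd: "frechet_derivative f (at (t *\<^sub>R z0)) = a0 (t *\<^sub>R z0)"
      using df[rule_format, OF tU] unfolding d0_def by (simp add: fun_eq_iff)
    have "(f has_derivative a0 (t *\<^sub>R z0)) (at (t *\<^sub>R z0))"
      using smooth_has_deriv[OF sm tU] fd by simp
    from has_derivative_compose[OF has_derivative_scaleR_left[OF has_derivative_ident, of z0] this]
    have c: "((\<lambda>x. f (x *\<^sub>R z0)) has_derivative (\<lambda>h. a0 (t *\<^sub>R z0) (h *\<^sub>R z0))) (at t)" .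
    have "(\<lambda>h. a0 (t *\<^sub>R z0) (h *\<^sub>R z0)) = (*) (1 / t)"
      using t by (auto simp: fun_eq_iff a0_def z0z0 power2_eq_square)
    with c have "((\<lambda>x. f (x *\<^sub>R z0)) has_real_derivative (1 / t)) (at t)"
      by (simp add: has_field_derivative_def)
    from DERIV_diff[OF this DERIV_ln_divide[OF t]] show ?thesis unfolding g_def by simp
  qed
  have "g 2 = g 1"
  proof (rule DERIV_isconst_end[of 1 2 g])
    have "\<forall>x\<in>{1..2}. isCont g x"
    proof
      fix x :: real assume "x \<in> {1..2}"
      then have "x > 0" by simp
      from DERIV_isCont[OF gd[OF this]] show "isCont g x" .
    qed
    then show "continuous_on {1..2} g" by (rule continuous_at_imp_continuous_on)
  qed (use gd in auto)
  moreover have "f (2 *\<^sub>R z0) = f z0"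
  proof -
    have "z0 \<in> U" by (simp add: U_iff z0_def zero_prod_def)
    with f0 show ?thesis unfolding form0_def hopf_gen_def by blast
  qed
  ultimately have "ln (2::real) = 0" by (simp add: g_def)
  then show False by simp
qed

lemma H1dR: "H1dR_nontrivial"
  unfolding H1dR_nontrivial_def using a0_form1 a0_closed a0_not_exact by blast


lemma decay_aux:
  fixes \<psi> :: "pt \<Rightarrow> real"
  assumes inv: "\<forall>z\<in>U. \<psi> (2 *\<^sub>R z) = \<psi> z" and cont: "continuous_on U \<psi>"
  shows "\<exists>M. \<forall>z\<in>U. \<psi> z \<le> M"
proof -
  define A where "A = cball (0::pt) 2 \<inter> - ball 0 1"
  have cA: "compact A" unfolding A_def
    by (rule compact_Int_closed[OF compact_cball]) (simp add: closed_Compl)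
  have AU: "A \<subseteq> U" by (auto simp: A_def U_iff)
  have "compact (\<psi> ` A)"
    by (rule compact_continuous_image[OF continuous_on_subset[OF cont AU] cA])
  then have "bounded (\<psi> ` A)" by (rule compact_imp_bounded)
  then obtain M where M: "\<forall>x\<in>A. norm (\<psi> x) \<le> M" unfolding bounded_iff by blast
  have half: "\<psi> z = \<psi> ((1/2) *\<^sub>R z)" if "z \<in> U" for z
  proof -
    have "(1/2) *\<^sub>R z \<in> U" using that by (simp add: U_iff)
    from inv[rule_format, OF this] show ?thesis by simp
  qed
  have ind: "\<forall>z. inverse (2 ^ N) \<le> norm z \<and> norm z \<le> 2 * 2 ^ N \<longrightarrow> \<psi> z \<le> M" for N :: nat
  proof (induction N)
    case 0
    show ?case
    proof (intro allI impI)
      fix z :: pt assume "inverse (2 ^ 0) \<le> norm z \<and> norm z \<le> 2 * 2 ^ 0"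
      then have "z \<in> A" by (simp add: A_def)
      then show "\<psi> z \<le> M" using M by force
    qed
  next
    case (Suc N)
    show ?case
    proof (intro allI impI)
      fix z :: pt assume z: "inverse (2 ^ Suc N) \<le> norm z \<and> norm z \<le> 2 * 2 ^ Suc N"
      have p1: "(1::real) \<le> 2 ^ N" by simp
      have p2: "inverse ((2::real) ^ N) \<le> 1" using p1 by (simp add: inverse_le_1_iff)
      have zU: "z \<in> U"
      proof -
        have "0 < inverse ((2::real) ^ Suc N)" by simp
        then have "norm z > 0" using z by linarith
        then show ?thesis by (simp add: U_iff)
      qed
      consider "inverse (2 ^ N) \<le> norm z \<and> norm z \<le> 2 * 2 ^ N" | "norm z > 2 * 2 ^ N" | "norm z < inverse (2 ^ N)"
        by linarith
      then show "\<psi> z \<le> M"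
      proof cases
        case 1
        then show ?thesis using Suc.IH by blast
      next
        case 2
        have n: "norm ((1/2) *\<^sub>R z) = norm z / 2" by simp
        have "inverse (2 ^ N) * 2 \<le> norm z" using p1 p2 2 by linarith
        then have g1: "inverse (2 ^ N) \<le> norm z / 2" by linarith
        have g2: "norm z / 2 \<le> 2 * 2 ^ N" using z by simp
        have "inverse (2 ^ N) \<le> norm ((1/2) *\<^sub>R z) \<and> norm ((1/2) *\<^sub>R z) \<le> 2 * 2 ^ N"
          unfolding n using g1 g2 by simp
        then have "\<psi> ((1/2) *\<^sub>R z) \<le> M" using Suc.IH by blast
        then show ?thesis using half[OF zU] by simp
      next
        case 3
        have "norm (2 *\<^sub>R z) = 2 * norm z" by simp
        moreover have "inverse ((2::real) ^ N) \<le> 2 * norm z" using z by (simp add: field_simps)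
        moreover have "norm z \<le> 2 ^ N" using 3 p1 p2 by linarith
        ultimately have "inverse (2 ^ N) \<le> norm (2 *\<^sub>R z) \<and> norm (2 *\<^sub>R z) \<le> 2 * 2 ^ N"
          by simp
        then have "\<psi> (2 *\<^sub>R z) \<le> M" using Suc.IH by blast
        then show ?thesis using inv zU by simp
      qed
    qed
  qed
  have "\<psi> z \<le> M" if zU: "z \<in> U" for z
  proof -
    have nz: "norm z > 0" using zU by (simp add: U_iff)
    obtain N1 where N1: "norm z < 2 ^ N1" using real_arch_pow[of 2 "norm z"] by auto
    obtain N2 where N2: "inverse (norm z) < 2 ^ N2" using real_arch_pow[of 2 "inverse (norm z)"] by auto
    have a: "(2::real) ^ N1 \<le> 2 ^ (N1 + N2)" and b: "(2::real) ^ N2 \<le> 2 ^ (N1 + N2)"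
      by (simp_all add: power_increasing)
    have "inverse (2 ^ (N1 + N2)) \<le> norm z"
    proof -
      have "inverse (norm z) \<le> 2 ^ (N1 + N2)" using N2 b by linarith
      then show ?thesis using nz by (simp add: inverse_le_imp_le)
    qed
    moreover have "norm z \<le> 2 * 2 ^ (N1 + N2)"
    proof -
      have "(0::real) \<le> 2 ^ (N1 + N2)" by simp
      then show ?thesis using N1 a by linarith
    qed
    ultimately show ?thesis using ind by blast
  qed
  then show ?thesis by blast
qed

lemma form1_half:
  assumes "form1 \<alpha>" "z \<in> U"
  shows "\<alpha> (2 *\<^sub>R z) v = \<alpha> z v / 2"
proof -
  have zU2: "2 *\<^sub>R z \<in> U" using assms(2) by (simp add: U_iff)
  then have "linear (\<alpha> (2 *\<^sub>R z))" using assms(1) by (simp add: form1_def)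
  then have "\<alpha> (2 *\<^sub>R z) (2 *\<^sub>R v) = 2 * \<alpha> (2 *\<^sub>R z) v" by (simp add: linear_scale)
  moreover have "\<alpha> (2 *\<^sub>R z) (2 *\<^sub>R v) = \<alpha> z v"
    using assms unfolding form1_def hopf_gen_def by blast
  ultimately show ?thesis by simp
qed

lemma form1_decay:
  assumes "form1 \<alpha>"
  shows "\<exists>M. \<forall>z\<in>U. \<bar>\<alpha> z v\<bar> * norm z \<le> M"
proof (rule decay_aux)
  show "\<forall>z\<in>U. \<bar>\<alpha> (2 *\<^sub>R z) v\<bar> * norm (2 *\<^sub>R z) = \<bar>\<alpha> z v\<bar> * norm z"
  proof
    fix z assume z: "z \<in> U"
    have e: "\<alpha> (2 *\<^sub>R z) v = \<alpha> z v / 2" using form1_half[OF assms z] .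
    show "\<bar>\<alpha> (2 *\<^sub>R z) v\<bar> * norm (2 *\<^sub>R z) = \<bar>\<alpha> z v\<bar> * norm z"
      by (simp only: e) simp
  qed
  have "smooth_on U (\<lambda>z. \<alpha> z v)" using assms unfolding form1_def by blast
  then have "continuous_on U (\<lambda>z. \<alpha> z v)" unfolding smooth_on_def using Ck_on.simps(1) by blast
  then show "continuous_on U (\<lambda>z. \<bar>\<alpha> z v\<bar> * norm z)"
    by (intro continuous_on_mult continuous_on_rabs continuous_on_norm continuous_on_id)
qed

lemma neg_deriv:
  assumes "form1 \<alpha>" "z \<in> U"
  shows "frechet_derivative (\<lambda>y. \<alpha> y (-v)) (at z) = (\<lambda>h. - frechet_derivative (\<lambda>y. \<alpha> y v) (at z) h)"
proof -
  have sm: "smooth_on U (\<lambda>y. \<alpha> y v)" using assms(1) unfolding form1_def by blast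
  have "((\<lambda>y. - \<alpha> y v) has_derivative (\<lambda>h. - frechet_derivative (\<lambda>y. \<alpha> y v) (at z) h)) (at z)"
    using has_derivative_minus[OF smooth_has_deriv[OF sm assms(2)]] .
  then have "((\<lambda>y. \<alpha> y (-v)) has_derivative (\<lambda>h. - frechet_derivative (\<lambda>y. \<alpha> y v) (at z) h)) (at z)"
  proof (rule has_derivative_transform_within_open[OF _ open_U assms(2)])
    fix y assume "y \<in> U"
    then have "linear (\<alpha> y)" using assms(1) unfolding form1_def by blast
    then show "- \<alpha> y v = \<alpha> y (-v)" by (simp add: linear_neg)
  qed
  from frechet_derivative_at[OF this] show ?thesis by simp
qed

lemma slice_zero:
  assumes K: "\<alpha> \<in> kerLJ1" and C: "closed1 \<alpha>"
    and EU: "\<forall>x. (p + x * r, q + x * s) \<in> U"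
    and EN: "\<forall>x. cmod x \<le> norm (p + x * r, q + x * s)"
  shows "\<alpha> (p + x0 * r, q + x0 * s) (r, s) = 0 \<and> \<alpha> (p + x0 * r, q + x0 * s) (Jc (r, s)) = 0"
proof -
  define e where "e = (r, s)"
  define E where "E x = (p + x * r, q + x * s)" for x
  have EU': "E x \<in> U" for x using EU unfolding E_def by blast
  have EN': "cmod x \<le> norm (E x)" for x using EN unfolding E_def by blast
  have f1: "form1 \<alpha>" using K by (simp add: kerLJ1_def)
  have LJ: "\<forall>z\<in>U. \<forall>v w. LJ1 \<alpha> z v w = 0" using K by (simp add: kerLJ1_def)
  have sm: "smooth_on U (\<lambda>z. \<alpha> z v)" for v using f1 unfolding form1_def by blast
  define D where "D v z = frechet_derivative (\<lambda>y. \<alpha> y v) (at z)" for v z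
  have hd: "((\<lambda>y. \<alpha> y v) has_derivative D v z) (at z)" if "z \<in> U" for v z
    unfolding D_def by (rule smooth_has_deriv[OF sm that])
  have lD: "linear (D v z)" if "z \<in> U" for v z using has_derivative_linear[OF hd[OF that]] .
  have JJ: "Jc (Jc e) = - e" by (simp add: Jc_def e_def)
  have CR1: "D (Jc e) z e = D e z (Jc e)" if "z \<in> U" for z
  proof -
    have "d1 \<alpha> z e (Jc e) = 0" using C that unfolding closed1_def by blast
    then show ?thesis unfolding d1_def D_def by simp
  qed
  have CR2: "D e z e + D (Jc e) z (Jc e) = 0" if "z \<in> U" for z
  proof -
    have "LJ1 \<alpha> z e (Jc e) = 0" using LJ that by blast
    moreover have "iJ2 (d1 \<alpha>) z e (Jc e) = 0"
    proof -
      have h: "\<And>v w. d1 \<alpha> z v w = 0" using C that unfolding closed1_def by blast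
      show ?thesis unfolding iJ2_def by (simp only: h add_0)
    qed
    ultimately have "d1 (iJ1 \<alpha>) z e (Jc e) = 0" unfolding LJ1_def by simp
    then have "frechet_derivative (\<lambda>y. \<alpha> y (Jc (Jc e))) (at z) e - frechet_derivative (\<lambda>y. \<alpha> y (Jc e)) (at z) (Jc e) = 0"
      unfolding d1_def iJ1_def by simp
    then have "frechet_derivative (\<lambda>y. \<alpha> y (- e)) (at z) e - D (Jc e) z (Jc e) = 0"
      unfolding JJ D_def .
    then show ?thesis using neg_deriv[OF f1 that, of e] unfolding D_def by simp
  qed
  have hE: "(E has_derivative (\<lambda>h. (h * r, h * s))) (at x)" for x
  proof -
    have a: "((\<lambda>x. p + x * r) has_derivative (\<lambda>h. h * r)) (at x)"
      by (rule has_derivative_eq_rhs[OF has_derivative_add[OF has_derivative_const has_derivative_mult_left[OF has_derivative_ident]]]) simp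
    have b: "((\<lambda>x. q + x * s) has_derivative (\<lambda>h. h * s)) (at x)"
      by (rule has_derivative_eq_rhs[OF has_derivative_add[OF has_derivative_const has_derivative_mult_left[OF has_derivative_ident]]]) simp
    show ?thesis unfolding E_def using has_derivative_Pair[OF a b] .
  qed
  have dec: "(h * r, h * s) = Re h *\<^sub>R e + Im h *\<^sub>R Jc e" for h :: complex
    by (simp add: e_def Jc_def scaleR_conv_of_real complex_eq_iff algebra_simps)
  have hP: "((\<lambda>x. \<alpha> (E x) v) has_derivative (\<lambda>h. Re h * D v (E x) e + Im h * D v (E x) (Jc e))) (at x)" for v x
  proof -
    have "((\<lambda>x. \<alpha> (E x) v) has_derivative (\<lambda>h. D v (E x) (h * r, h * s))) (at x)"
      using has_derivative_compose[OF hE hd[OF EU']] .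
    moreover have "(\<lambda>h. D v (E x) (h * r, h * s)) = (\<lambda>h. Re h * D v (E x) e + Im h * D v (E x) (Jc e))"
      unfolding dec using lD[OF EU'] by (simp add: linear_add linear_scale)
    ultimately show ?thesis by simp
  qed
  define G where "G x = complex_of_real (\<alpha> (E x) e) - \<i> * complex_of_real (\<alpha> (E x) (Jc e))" for x
  have hG: "(G has_field_derivative (of_real (D e (E x) e) - \<i> * of_real (D (Jc e) (E x) e))) (at x)" for x
  proof -
    have "(G has_derivative (\<lambda>h. of_real (Re h * D e (E x) e + Im h * D e (E x) (Jc e))
        - \<i> * of_real (Re h * D (Jc e) (E x) e + Im h * D (Jc e) (E x) (Jc e)))) (at x)"
      unfolding G_def
      using has_derivative_diff[OF bounded_linear.has_derivative[OF bounded_linear_of_real hP]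
          has_derivative_mult_right[OF bounded_linear.has_derivative[OF bounded_linear_of_real hP]]] .
    moreover have "(\<lambda>h. of_real (Re h * D e (E x) e + Im h * D e (E x) (Jc e))
        - \<i> * of_real (Re h * D (Jc e) (E x) e + Im h * D (Jc e) (E x) (Jc e)))
       = (*) (of_real (D e (E x) e) - \<i> * of_real (D (Jc e) (E x) e))"
    proof
      fix h :: complex
      have c1: "D (Jc e) (E x) e = D e (E x) (Jc e)" using CR1[OF EU'] .
      have c2: "D (Jc e) (E x) (Jc e) = - D e (E x) e" using CR2[OF EU'[of x]] by linarith
      show "of_real (Re h * D e (E x) e + Im h * D e (E x) (Jc e))
        - \<i> * of_real (Re h * D (Jc e) (E x) e + Im h * D (Jc e) (E x) (Jc e))
       = (of_real (D e (E x) e) - \<i> * of_real (D (Jc e) (E x) e)) * h"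
        unfolding c2 c1 by (simp add: complex_eq_iff algebra_simps)
    qed
    ultimately show ?thesis unfolding has_field_derivative_def by simp
  qed
  have hol: "G holomorphic_on UNIV"
    unfolding holomorphic_on_def field_differentiable_def using hG by auto
  obtain M1 where M1: "\<forall>z\<in>U. \<bar>\<alpha> z e\<bar> * norm z \<le> M1" using form1_decay[OF f1] by blast
  obtain M2 where M2: "\<forall>z\<in>U. \<bar>\<alpha> z (Jc e)\<bar> * norm z \<le> M2" using form1_decay[OF f1] by blast
  have bnd: "norm (G x) \<le> (M1 + M2) * norm (inverse x)" if "1 \<le> norm x" for x
  proof -
    have "norm (G x) \<le> \<bar>\<alpha> (E x) e\<bar> + \<bar>\<alpha> (E x) (Jc e)\<bar>"
      unfolding G_def using norm_triangle_ineq4[of "complex_of_real (\<alpha> (E x) e)" "\<i> * complex_of_real (\<alpha> (E x) (Jc e))"]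
      by (simp add: norm_mult)
    moreover have "\<bar>\<alpha> (E x) e\<bar> * cmod x \<le> M1"
    proof -
      have "\<bar>\<alpha> (E x) e\<bar> * cmod x \<le> \<bar>\<alpha> (E x) e\<bar> * norm (E x)"
        using EN'[of x] by (simp add: mult_left_mono)
      then show ?thesis using M1 EU'[of x] by fastforce
    qed
    moreover have "\<bar>\<alpha> (E x) (Jc e)\<bar> * cmod x \<le> M2"
    proof -
      have "\<bar>\<alpha> (E x) (Jc e)\<bar> * cmod x \<le> \<bar>\<alpha> (E x) (Jc e)\<bar> * norm (E x)"
        using EN'[of x] by (simp add: mult_left_mono)
      then show ?thesis using M2 EU'[of x] by fastforce
    qed
    ultimately have "norm (G x) * cmod x \<le> M1 + M2"
      using that by (smt (verit, best) mult_right_mono norm_ge_zero distrib_right)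
    moreover have "cmod x > 0" using that by linarith
    ultimately have "norm (G x) \<le> (M1 + M2) / cmod x" by (simp add: pos_le_divide_eq)
    then show ?thesis by (simp add: norm_inverse divide_inverse)
  qed
  have "(G \<longlongrightarrow> 0) at_infinity"
  proof (rule Lim_null_comparison)
    show "\<forall>\<^sub>F x in at_infinity. norm (G x) \<le> (M1 + M2) * norm (inverse x)"
      unfolding eventually_at_infinity using bnd by blast
    show "((\<lambda>x::complex. (M1 + M2) * norm (inverse x)) \<longlongrightarrow> 0) at_infinity"
    proof -
      have t: "((\<lambda>x::complex. inverse x) \<longlongrightarrow> 0) at_infinity" using tendsto_inverse_0 by simp
      show ?thesis using tendsto_mult_right_zero[OF tendsto_norm_zero[OF t]] .
    qed
  qed
  from Liouville_weak[OF hol this] have "G x0 = 0" .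
  then show ?thesis unfolding G_def E_def e_def by (simp add: complex_eq_iff)
qed

lemma span4:
  fixes f :: "pt \<Rightarrow> real"
  assumes l: "linear f" and h: "f (1, 0) = 0" "f (\<i>, 0) = 0" "f (0, 1) = 0" "f (0, \<i>) = 0"
  shows "f v = 0"
proof -
  obtain v1 v2 where v: "v = (v1, v2)" by (cases v)
  have eq: "v = Re v1 *\<^sub>R (1, 0) + Im v1 *\<^sub>R (\<i>, 0) + Re v2 *\<^sub>R (0, 1) + Im v2 *\<^sub>R (0, \<i>)"
    unfolding v by (simp add: scaleR_conv_of_real complex_eq_iff)
  have "f v = f (Re v1 *\<^sub>R (1, 0) + Im v1 *\<^sub>R (\<i>, 0) + Re v2 *\<^sub>R (0, 1) + Im v2 *\<^sub>R (0, \<i>))"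
    using arg_cong[OF eq, of f] .
  also have "\<dots> = Re v1 * f (1, 0) + Im v1 * f (\<i>, 0) + Re v2 * f (0, 1) + Im v2 * f (0, \<i>)"
    by (simp only: linear_add[OF l] linear_scale[OF l] real_scaleR_def)
  finally have "f v = Re v1 * f (1, 0) + Im v1 * f (\<i>, 0) + Re v2 * f (0, 1) + Im v2 * f (0, \<i>)" .
  then show ?thesis using h by simp
qed

lemma alpha_zero:
  assumes K: "\<alpha> \<in> kerLJ1" and C: "closed1 \<alpha>" and zU: "z \<in> U"
  shows "\<alpha> z v = 0"
proof -
  obtain z1 z2 where z: "z = (z1, z2)" by (cases z)
  have l: "linear (\<alpha> z)" using K zU by (simp add: kerLJ1_def form1_def)
  have nz: "z1 \<noteq> 0 \<or> z2 \<noteq> 0" using zU z by (simp add: U_iff zero_prod_def)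
  show ?thesis
  proof (cases "z2 = 0")
    case False
    have s1: "\<alpha> (0 + z1 * 1, z2 + z1 * 0) (1, 0) = 0 \<and> \<alpha> (0 + z1 * 1, z2 + z1 * 0) (Jc (1, 0)) = 0"
      by (rule slice_zero[OF K C]) (use False in \<open>auto simp: U_iff zero_prod_def norm_fst_le\<close>)
    then have a1: "\<alpha> z (1, 0) = 0" and a2: "\<alpha> z (\<i>, 0) = 0" by (simp_all add: z Jc_def)
    show ?thesis
    proof (cases "z1 = 0")
      case False
      have s2: "\<alpha> (z1 + z2 * 0, 0 + z2 * 1) (0, 1) = 0 \<and> \<alpha> (z1 + z2 * 0, 0 + z2 * 1) (Jc (0, 1)) = 0"
        by (rule slice_zero[OF K C]) (use False in \<open>auto simp: U_iff zero_prod_def norm_snd_le\<close>)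
      then have a3: "\<alpha> z (0, 1) = 0" and a4: "\<alpha> z (0, \<i>) = 0" by (simp_all add: z Jc_def)
      show ?thesis using span4[OF l a1 a2 a3 a4] .
    next
      case True
      have s2: "\<alpha> (0 + 0 * 1, z2 + 0 * 1) (1, 1) = 0 \<and> \<alpha> (0 + 0 * 1, z2 + 0 * 1) (Jc (1, 1)) = 0"
        by (rule slice_zero[OF K C]) (use \<open>z2 \<noteq> 0\<close> in \<open>auto simp: U_iff zero_prod_def norm_fst_le\<close>)
      then have b3: "\<alpha> z (1, 1) = 0" and b4: "\<alpha> z (\<i>, \<i>) = 0" by (simp_all add: z Jc_def True)
      have a3: "\<alpha> z (0, 1) = 0"
      proof -
        have "\<alpha> z ((1, 1) - (1, 0)) = \<alpha> z (1, 1) - \<alpha> z (1, 0)" by (simp only: linear_diff[OF l])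
        then show ?thesis using a1 b3 by simp
      qed
      have a4: "\<alpha> z (0, \<i>) = 0"
      proof -
        have "\<alpha> z ((\<i>, \<i>) - (\<i>, 0)) = \<alpha> z (\<i>, \<i>) - \<alpha> z (\<i>, 0)" by (simp only: linear_diff[OF l])
        then show ?thesis using a2 b4 by simp
      qed
      show ?thesis using span4[OF l a1 a2 a3 a4] .
    qed
  next
    case True
    then have z1: "z1 \<noteq> 0" using nz by simp
    have s2: "\<alpha> (z1 + 0 * 0, 0 + 0 * 1) (0, 1) = 0 \<and> \<alpha> (z1 + 0 * 0, 0 + 0 * 1) (Jc (0, 1)) = 0"
      by (rule slice_zero[OF K C]) (use z1 in \<open>auto simp: U_iff zero_prod_def norm_snd_le\<close>)
    then have a3: "\<alpha> z (0, 1) = 0" and a4: "\<alpha> z (0, \<i>) = 0" by (simp_all add: z Jc_def True)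
    have s1: "\<alpha> (z1 + 0 * 1, 0 + 0 * 1) (1, 1) = 0 \<and> \<alpha> (z1 + 0 * 1, 0 + 0 * 1) (Jc (1, 1)) = 0"
      by (rule slice_zero[OF K C]) (use z1 in \<open>auto simp: U_iff zero_prod_def norm_snd_le\<close>)
    then have b1: "\<alpha> z (1, 1) = 0" and b2: "\<alpha> z (\<i>, \<i>) = 0" by (simp_all add: z Jc_def True)
    have a1: "\<alpha> z (1, 0) = 0"
    proof -
      have "\<alpha> z ((1, 1) - (0, 1)) = \<alpha> z (1, 1) - \<alpha> z (0, 1)" by (simp only: linear_diff[OF l])
      then show ?thesis using a3 b1 by simp
    qed
    have a2: "\<alpha> z (\<i>, 0) = 0"
    proof -
      have "\<alpha> z ((\<i>, \<i>) - (0, \<i>)) = \<alpha> z (\<i>, \<i>) - \<alpha> z (0, \<i>)" by (simp only: linear_diff[OF l])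
      then show ?thesis using a4 b2 by simp
    qed
    show ?thesis using span4[OF l a1 a2 a3 a4] .
  qed
qed

lemma fd_zero: "frechet_derivative (\<lambda>_. 0::real) (at z) = (\<lambda>v. 0)"
  using frechet_derivative_at[OF has_derivative_const[of "0::real" "at z"]] by simp

lemma H1J: "H1J_trivial"
  unfolding H1J_trivial_def
proof (intro ballI impI)
  fix \<alpha> assume K: "\<alpha> \<in> kerLJ1" and C: "closed1 \<alpha>"
  have "(\<lambda>_. 0::real) \<in> kerLJ0"
    unfolding kerLJ0_def form0_def LJ0_def iJ1_def d0_def
    using SC_smooth[OF SC.const[of 0]] by (simp add: fd_zero)
  moreover have "\<forall>z\<in>U. d0 (\<lambda>_. 0) z = \<alpha> z"
  proof
    fix z assume zU: "z \<in> U"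
    show "d0 (\<lambda>_. 0) z = \<alpha> z"
      unfolding d0_def fd_zero using alpha_zero[OF K C zU] by (simp add: fun_eq_iff)
  qed
  ultimately show "\<exists>f\<in>kerLJ0. \<forall>z\<in>U. d0 f z = \<alpha> z" by blast
qed

theorem mainTheorem19:
  shows "H1J_trivial \<and> H1dR_nontrivial"
  using H1J H1dR by blast

end
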